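(* There exist supplementary difference sets in $\mathbb{Z}_{69}$ with parameters $(69;31,27;24)$; that is, there exist subsets $X,Y\subseteq\mathbb{Z}_{69}$ with $|X|=31$, $|Y|=27$ such that for every nonzero $c\in\mathbb{Z}_{69}$, the number of ordered pairs $(a,b)\in X\times X$ with $a-b\equiv c\pmod{69}$ plus the number of ordered pairs $(a,b)\in Y\times Y$ with $a-b\equiv c\pmod{69}$ equals $24$.
   Context: $\mathbb{Z}_v$ denotes the ring of integers modulo $v$. Subsets $X_1,\dots,X_t\subseteq\mathbb{Z}_v$ with $|X_i|=k_i$ are supplementary difference sets (SDS) with parameters $(v;k_1,\dots,k_t;\lambda)$ if for every nonzero $c\in\mathbb{Z}_v$ there are exactly $\lambda$ ordered triples $(a,b,i)$ with $a,b\in X_i$ and $a-b\equiv c\pmod v$. *)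

theory Defs
  imports Main
begin

text \<open>Z_v is modelled by the residues {0..<v} :: nat set; subtraction mod v is
  (a + v - b) mod v for a, b < v.\<close>

definition diff_count :: "nat \<Rightarrow> nat set \<Rightarrow> nat \<Rightarrow> nat" where
  "diff_count v X c = card {(a, b). a \<in> X \<and> b \<in> X \<and> (a + v - b) mod v = c}"

definition is_SDS :: "nat \<Rightarrow> nat set list \<Rightarrow> nat list \<Rightarrow> nat \<Rightarrow> bool" where
  "is_SDS v Xs ks lam \<longleftrightarrow>
     length Xs = length ks \<and>
     (\<forall>i < length Xs. Xs ! i \<subseteq> {0..<v} \<and> card (Xs ! i) = ks ! i) \<and>
     (\<forall>c \<in> {1..<v}. (\<Sum>i < length Xs. diff_count v (Xs ! i) c) = lam)"

end

theory Submission
  imports Defs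
begin

lemma key: fixes a b c v :: nat assumes "a < v" "b < v" "c < v"
  shows "(a + v - b) mod v = c \<longleftrightarrow> b = (a + v - c) mod v"
proof -
  have i1: "int ((a + v - b) mod v) = (int a + int v - int b) mod int v"
    using assms by (simp add: zmod_int of_nat_diff)
  have i2: "int ((a + v - c) mod v) = (int a + int v - int c) mod int v"
    using assms by (simp add: zmod_int of_nat_diff)
  have A: "(int a - int b) mod int v = int c \<longleftrightarrow> (int a - int c) mod int v = int b"
  proof
    assume h: "(int a - int b) mod int v = int c"
    hence "(int a - int c) mod int v = (int a - (int a - int b) mod int v) mod int v" by simp
    also have "\<dots> = (int a - (int a - int b)) mod int v" by (simp add: mod_diff_right_eq)
    also have "\<dots> = int b" using assms by simp
    finally show "(int a - int c) mod int v = int b" .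
  next
    assume h: "(int a - int c) mod int v = int b"
    hence "(int a - int b) mod int v = (int a - (int a - int c) mod int v) mod int v" by simp
    also have "\<dots> = (int a - (int a - int c)) mod int v" by (simp add: mod_diff_right_eq)
    also have "\<dots> = int c" using assms by simp
    finally show "(int a - int b) mod int v = int c" .
  qed
  have B: "(int a + int v - int x) mod int v = (int a - int x) mod int v" for x
    by (metis add.commute add_diff_eq mod_add_self1)
  show ?thesis using A B[of b] B[of c] i1 i2 by (metis of_nat_eq_iff)
qed

lemma dc_eq:
  assumes X: "X \<subseteq> {0..<v}" and c: "c < v"
  shows "diff_count v X c = card {a \<in> X. (a + v - c) mod v \<in> X}"
proof -
  have "{(a, b). a \<in> X \<and> b \<in> X \<and> (a + v - b) mod v = c}
        = (\<lambda>a. (a, (a + v - c) mod v)) ` {a \<in> X. (a + v - c) mod v \<in> X}"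
  proof (rule set_eqI, rule iffI)
    fix p assume "p \<in> {(a, b). a \<in> X \<and> b \<in> X \<and> (a + v - b) mod v = c}"
    then obtain a b where p: "p = (a, b)" "a \<in> X" "b \<in> X" "(a + v - b) mod v = c" by blast
    have "a < v" "b < v" using X p by auto
    hence "b = (a + v - c) mod v" using key[OF _ _ c] p(4) by blast
    thus "p \<in> (\<lambda>a. (a, (a + v - c) mod v)) ` {a \<in> X. (a + v - c) mod v \<in> X}"
      using p by auto
  next
    fix p assume "p \<in> (\<lambda>a. (a, (a + v - c) mod v)) ` {a \<in> X. (a + v - c) mod v \<in> X}"
    then obtain a where p: "p = (a, (a + v - c) mod v)" "a \<in> X" "(a + v - c) mod v \<in> X" by blast
    have "a < v" using X p by auto
    hence "(a + v - ((a + v - c) mod v)) mod v = c" using key[OF _ _ c] by simp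
    thus "p \<in> {(a, b). a \<in> X \<and> b \<in> X \<and> (a + v - b) mod v = c}" using p by auto
  qed
  moreover have "inj_on (\<lambda>a. (a, (a + v - c) mod v)) {a \<in> X. (a + v - c) mod v \<in> X}"
    by (auto simp: inj_on_def)
  ultimately show ?thesis unfolding diff_count_def by (simp add: card_image)
qed

lemma dc_list:
  assumes "distinct xs" "list_all (\<lambda>x. x < v) xs" "c < v"
  shows "diff_count v (set xs) c = length (filter (\<lambda>a. (a + v - c) mod v \<in> set xs) xs)"
proof -
  have "set xs \<subseteq> {0..<v}" using assms(2) by (auto simp: list_all_iff)
  hence "diff_count v (set xs) c = card {a \<in> set xs. (a + v - c) mod v \<in> set xs}"
    using dc_eq assms(3) by blast
  also have "\<dots> = card (set (filter (\<lambda>a. (a + v - c) mod v \<in> set xs) xs))"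
    by (metis set_filter)
  also have "\<dots> = length (filter (\<lambda>a. (a + v - c) mod v \<in> set xs) xs)"
    using distinct_card[OF distinct_filter[OF assms(1)]] by simp
  finally show ?thesis .
qed

lemma SDS2_check:
  assumes "distinct xs" "distinct ys" "list_all (\<lambda>x. x < v) xs" "list_all (\<lambda>x. x < v) ys"
    "length xs = k1" "length ys = k2"
    "list_all (\<lambda>c. length (filter (\<lambda>a. (a + v - c) mod v \<in> set xs) xs)
                  + length (filter (\<lambda>a. (a + v - c) mod v \<in> set ys) ys) = lam) [1..<v]"
  shows "is_SDS v [set xs, set ys] [k1, k2] lam"
proof -
  have sub: "set xs \<subseteq> {0..<v}" "set ys \<subseteq> {0..<v}" using assms(3,4) by (auto simp: list_all_iff)
  have cards: "card (set xs) = k1" "card (set ys) = k2" using assms by (simp_all add: distinct_card)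
  have L: "length [set xs, set ys] = length [k1, k2]" by simp
  have A: "\<forall>i<length [set xs, set ys]. [set xs, set ys] ! i \<subseteq> {0..<v} \<and> card ([set xs, set ys] ! i) = [k1, k2] ! i"
  proof (intro allI impI)
    fix i assume "i < length [set xs, set ys]"
    hence "i = 0 \<or> i = 1" by auto
    thus "[set xs, set ys] ! i \<subseteq> {0..<v} \<and> card ([set xs, set ys] ! i) = [k1, k2] ! i"
      using sub cards by auto
  qed
  have B: "\<forall>c \<in> {1..<v}. (\<Sum>i<length [set xs, set ys]. diff_count v ([set xs, set ys] ! i) c) = lam"
  proof
    fix c assume c1: "c \<in> {1..<v}"
    hence cv: "c < v" by simp
    have "(\<Sum>i<length [set xs, set ys]. diff_count v ([set xs, set ys] ! i) c) = diff_count v (set xs) c + diff_count v (set ys) c"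
      by (simp add: numeral_2_eq_2)
    also have "\<dots> = lam" using assms(7) c1 dc_list[OF assms(1,3) cv] dc_list[OF assms(2,4) cv]
      by (auto simp: list_all_iff)
    finally show "(\<Sum>i<length [set xs, set ys]. diff_count v ([set xs, set ys] ! i) c) = lam" .
  qed
  show ?thesis unfolding is_SDS_def using L A B by blast
qed

definition xs0 :: "nat list" where "xs0 = [2, 4, 6, 7, 8, 15, 16, 18, 19, 20, 21, 22, 23, 24, 28, 32, 34, 35, 41, 42, 46, 48, 51, 53, 56, 57, 60, 63, 66, 67, 68]"
definition ys0 :: "nat list" where "ys0 = [3, 5, 9, 10, 12, 13, 14, 16, 18, 19, 20, 21, 22, 28, 29, 33, 40, 42, 43, 45, 48, 51, 56, 60, 61, 66, 68]"

lemma check: "list_all (\<lambda>c. length (filter (\<lambda>a. (a + 69 - c) mod 69 \<in> set xs0) xs0)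
                  + length (filter (\<lambda>a. (a + 69 - c) mod 69 \<in> set ys0) ys0) = 24) [1..<69]"
  unfolding xs0_def ys0_def by code_simp

theorem mainTheorem3:
  shows "\<exists>X Y. is_SDS 69 [X, Y] [31, 27] 24"
proof -
  have "is_SDS 69 [set xs0, set ys0] [31, 27] 24"
    by (rule SDS2_check[OF _ _ _ _ _ _ check]) (simp_all add: xs0_def ys0_def)
  thus ?thesis by blast
qed

end
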